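(* There exists a set $\mathcal Z\subset\mathbb R^{Tp}$ with $|\mathcal Z|\le16\pi(Tp)^{3/2}$ such that $\|z\|_\infty\le1$ for all $z\in\mathcal Z$ and $\|\bar v\|_\ominus\le4\max_{z\in\mathcal Z}z^\top\bar v$ for all $\bar v\in\mathbb R^{Tp}$.
   Context: For $\bar v=[v_1^\top,\dots,v_T^\top]^\top\in\mathbb R^{Tp}$ ($v_i\in\mathbb R^p$) and a fixed number of rows $R\ge1$, $\mathsf{Toep}_T(\bar v)$ is the $R\times(R+T-1)$ block matrix with $1\times p$ blocks whose $i$-th block row has $v_T^\top,v_{T-1}^\top,\dots,v_1^\top$ in block columns $i,\dots,i+T-1$ and zeros elsewhere; $\|\bar v\|_\ominus:=\|\mathsf{Toep}_T(\bar v)\|_{\mathrm{op}}$. *)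

theory Defs
  imports Complex_Main
begin

text \<open>Vectors in R^n are represented as functions nat => real; only indices < n matter.
  The vector vbar in R^(T p) has blocks v_1,...,v_T, with v_t (1-indexed) component k
  (0-indexed) stored at vbar ((t-1)*p + k).\<close>

text \<open>Entry (i, c*p+k) of Toep_T(vbar), all indices 0-based: block row i, block column c.
  Block column i+j (j = 0..T-1) holds v_{T-j} (1-indexed), i.e. stored block T-1-j.\<close>
definition toep_entry :: "nat \<Rightarrow> nat \<Rightarrow> (nat \<Rightarrow> real) \<Rightarrow> nat \<Rightarrow> nat \<Rightarrow> real" where
  "toep_entry T p v i col =
     (let c = col div p; k = col mod p in
      if i \<le> c \<and> c < i + T then v ((T - 1 - (c - i)) * p + k) else 0)"

definition op_norm :: "nat \<Rightarrow> nat \<Rightarrow> (nat \<Rightarrow> nat \<Rightarrow> real) \<Rightarrow> real" where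
  "op_norm m n M = Sup {sqrt (\<Sum>i<m. (\<Sum>j<n. M i j * x j)\<^sup>2) | x. (\<Sum>j<n. (x j)\<^sup>2) \<le> 1}"

definition toep_norm :: "nat \<Rightarrow> nat \<Rightarrow> nat \<Rightarrow> (nat \<Rightarrow> real) \<Rightarrow> real" where
  "toep_norm R T p v = op_norm R ((R + T - 1) * p) (toep_entry T p v)"

end

theory Submission
  imports Defs "HOL-Analysis.L2_Norm"
begin

lemma cis_minus_one_norm: "cmod (cis t - 1) \<le> \<bar>t\<bar>"
proof -
  have "(cmod (cis t - 1))\<^sup>2 = (cos t - 1)\<^sup>2 + (sin t)\<^sup>2"
    by (simp add: cmod_power2)
  also have "\<dots> = 2 - 2 * cos t" using sin_cos_squared_add[of t]
    by (simp add: power2_eq_square algebra_simps)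
  also have "\<dots> = 4 * (sin (t/2))\<^sup>2" using cos_double_sin[of "t/2"] by simp
  also have "\<dots> = (2 * \<bar>sin (t/2)\<bar>)\<^sup>2" by (simp add: power2_eq_square)
  finally have h: "(cmod (cis t - 1))\<^sup>2 = (2 * \<bar>sin (t/2)\<bar>)\<^sup>2" .
  have "cmod (cis t - 1) = 2 * \<bar>sin (t/2)\<bar>"
    by (rule power2_eq_imp_eq[OF h]) auto
  also have "\<dots> \<le> 2 * \<bar>t/2\<bar>" using abs_sin_x_le_abs_x[of "t/2"] by simp
  finally show ?thesis by simp
qed

lemma cis_dist: "cmod (cis a - cis b) \<le> \<bar>a - b\<bar>"
proof -
  have "cis a - cis b = cis b * (cis (a - b) - 1)"
    by (simp add: algebra_simps cis_mult)
  hence "cmod (cis a - cis b) = cmod (cis (a - b) - 1)" by (simp add: norm_mult)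
  thus ?thesis using cis_minus_one_norm[of "a-b"] by simp
qed

lemma orth:
  assumes "a < N" "b < N"
  shows "(\<Sum>m<N. cis (2*pi*real m*real a/real N) * cnj (cis (2*pi*real m*real b/real N)))
       = (if a = b then of_nat N else 0)"
proof -
  define z where "z = cis (2*pi*(real a - real b)/real N)"
  have N: "N > 0" using assms by simp
  have t: "cis (2*pi*real m*real a/real N) * cnj (cis (2*pi*real m*real b/real N)) = z ^ m" for m
    unfolding z_def by (simp add: cis_cnj cis_mult DeMoivre algebra_simps diff_divide_distrib)
  show ?thesis
  proof (cases "a = b")
    case True then show ?thesis by (simp add: cis_cnj cis_mult)
  next
    case False
    have e: "real N * (2*pi*(real a - real b)/real N) = 2*pi*(of_int (int a - int b))"
      using N by simp
    have zN: "z ^ N = 1" unfolding z_def DeMoivre e by (rule cis_multiple_2pi) simp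
    have "z \<noteq> 1"
    proof
      assume "z = 1"
      hence "cos (2*pi*(real a - real b)/real N) = 1" unfolding z_def
        by (metis complex.sel(1) cis.sel(1) one_complex.sel(1))
      then obtain n :: int where n: "2*pi*(real a - real b)/real N = n * 2 * pi"
        by (auto simp: cos_one_2pi_int)
      hence "2*pi*(real a - real b) = 2*pi*(n * real N)" using N by (simp add: field_simps)
      hence "real a - real b = n * real N" using pi_gt_zero by (metis mult_cancel_left mult_eq_0_iff pi_neq_zero zero_neq_numeral)
      hence eq: "int a - int b = n * int N" by (metis of_int_of_nat_eq of_int_diff of_int_eq_iff of_int_mult)
      have "\<bar>int a - int b\<bar> < int N" using assms by auto
      have "n = 0"
      proof (rule ccontr)
        assume "n \<noteq> 0" hence n1: "\<bar>n\<bar> \<ge> 1" by simp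
        have "\<bar>n * int N\<bar> = \<bar>n\<bar> * int N" by (simp add: abs_mult)
        also have "\<dots> \<ge> 1 * int N" using n1 by (intro mult_right_mono) auto
        finally show False using eq \<open>\<bar>int a - int b\<bar> < int N\<close> by simp
      qed
      thus False using eq False by simp
    qed
    then show ?thesis using False by (simp add: t sum_gp_strict zN)
  qed
qed

lemma parseval:
  fixes f :: "'i \<Rightarrow> complex" and \<chi> :: "'m \<Rightarrow> 'i \<Rightarrow> complex"
  assumes M: "finite M" and I: "finite I"
    and orth: "\<And>i j. i \<in> I \<Longrightarrow> j \<in> I \<Longrightarrow> (\<Sum>m\<in>M. \<chi> m i * cnj (\<chi> m j)) = (if i = j then complex_of_real c else 0)"
  shows "(\<Sum>m\<in>M. (cmod (\<Sum>i\<in>I. f i * \<chi> m i))\<^sup>2) = c * (\<Sum>i\<in>I. (cmod (f i))\<^sup>2)"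
proof -
  have "complex_of_real (\<Sum>m\<in>M. (cmod (\<Sum>i\<in>I. f i * \<chi> m i))\<^sup>2)
      = (\<Sum>m\<in>M. (\<Sum>i\<in>I. f i * \<chi> m i) * cnj (\<Sum>j\<in>I. f j * \<chi> m j))"
    by (simp only: of_real_sum complex_norm_square)
  also have "\<dots> = (\<Sum>m\<in>M. \<Sum>j\<in>I. \<Sum>i\<in>I. f i * cnj (f j) * (\<chi> m i * cnj (\<chi> m j)))"
    by (simp add: cnj_sum sum_distrib_left sum_distrib_right mult_ac)
  also have "\<dots> = (\<Sum>j\<in>I. \<Sum>m\<in>M. \<Sum>i\<in>I. f i * cnj (f j) * (\<chi> m i * cnj (\<chi> m j)))"
    by (rule sum.swap)
  also have "\<dots> = (\<Sum>j\<in>I. \<Sum>i\<in>I. \<Sum>m\<in>M. f i * cnj (f j) * (\<chi> m i * cnj (\<chi> m j)))"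
    by (intro sum.cong refl, rule sum.swap)
  also have "\<dots> = (\<Sum>j\<in>I. \<Sum>i\<in>I. f i * cnj (f j) * (\<Sum>m\<in>M. \<chi> m i * cnj (\<chi> m j)))"
    by (simp add: sum_distrib_left)
  also have "\<dots> = (\<Sum>j\<in>I. \<Sum>i\<in>I. f i * cnj (f j) * (if i = j then complex_of_real c else 0))"
    by (intro sum.cong refl) (simp add: orth)
  also have "\<dots> = (\<Sum>i\<in>I. f i * cnj (f i) * complex_of_real c)"
    using I by (simp add: if_distrib cong: if_cong)
  also have "\<dots> = complex_of_real (c * (\<Sum>i\<in>I. (cmod (f i))\<^sup>2))"
    by (simp add: complex_norm_square[symmetric] sum_distrib_left mult_ac del: of_real_power)
  finally show ?thesis by (simp only: of_real_eq_iff)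
qed

definition chi :: "nat \<Rightarrow> nat \<Rightarrow> nat \<Rightarrow> complex" where
  "chi N m a = cis (2*pi*real m*real a/real N)"

definition rho :: "nat \<Rightarrow> complex" where
  "rho q = (if q = 0 then 1 else if q = 1 then -\<i> else if q = 2 then -1 else \<i>)"

lemma orth1: "a < N \<Longrightarrow> b < N \<Longrightarrow>
   (\<Sum>m<N. chi N m a * cnj (chi N m b)) = (if a = b then complex_of_real (real N) else 0)"
  unfolding chi_def using orth[of a N b] by simp

lemma parseval1:
  fixes f :: "nat \<Rightarrow> complex"
  assumes "L \<le> N"
  shows "(\<Sum>m<N. (cmod (\<Sum>a<L. f a * chi N m a))\<^sup>2) = real N * (\<Sum>a<L. (cmod (f a))\<^sup>2)"
  by (rule parseval) (use assms in \<open>auto simp: orth1\<close>)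

lemma parseval2:
  fixes f :: "nat \<times> nat \<Rightarrow> complex"
  assumes "T \<le> K" "P \<le> Q"
  shows "(\<Sum>(a,l)\<in>{..<K}\<times>{..<Q}. (cmod (\<Sum>(d,k)\<in>{..<T}\<times>{..<P}. f (d,k) * (chi K a d * chi Q l k)))\<^sup>2)
     = real K * real Q * (\<Sum>i\<in>{..<T}\<times>{..<P}. (cmod (f i))\<^sup>2)"
proof -
  have "(\<Sum>m\<in>{..<K}\<times>{..<Q}. (cmod (\<Sum>i\<in>{..<T}\<times>{..<P}. f i * (\<lambda>(a,l) (d,k). chi K a d * chi Q l k) m i))\<^sup>2)
     = (real K * real Q) * (\<Sum>i\<in>{..<T}\<times>{..<P}. (cmod (f i))\<^sup>2)"
  proof (rule parseval)
    fix i j assume i: "i \<in> {..<T}\<times>{..<P}" and j: "j \<in> {..<T}\<times>{..<P}"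
    obtain d k where ik: "i = (d,k)" by force
    obtain d' k' where jk: "j = (d',k')" by force
    have "(\<Sum>m\<in>{..<K}\<times>{..<Q}. (\<lambda>(a,l) (d,k). chi K a d * chi Q l k) m i * cnj ((\<lambda>(a,l) (d,k). chi K a d * chi Q l k) m j))
       = (\<Sum>(a,l)\<in>{..<K}\<times>{..<Q}. (chi K a d * cnj (chi K a d')) * (chi Q l k * cnj (chi Q l k')))"
      by (intro sum.cong refl) (auto simp: ik jk mult_ac)
    also have "\<dots> = (\<Sum>a<K. chi K a d * cnj (chi K a d')) * (\<Sum>l<Q. chi Q l k * cnj (chi Q l k'))"
      by (simp add: sum_product sum.cartesian_product)
    also have "\<dots> = (if i = j then complex_of_real (real K * real Q) else 0)"
      using i j assms by (auto simp: ik jk orth1)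
    finally show "(\<Sum>m\<in>{..<K}\<times>{..<Q}. (\<lambda>(a,l) (d,k). chi K a d * chi Q l k) m i * cnj ((\<lambda>(a,l) (d,k). chi K a d * chi Q l k) m j))
       = (if i = j then complex_of_real (real K * real Q) else 0)" .
  qed auto
  thus ?thesis by (simp add: case_prod_unfold)
qed

lemma cis_chi_shift:
  fixes r :: int
  assumes "K > 0"
  shows "cis (2*pi*real_of_int r/real K * real d) = chi K (nat (r mod int K)) d"
proof -
  have r: "r = (r mod int K) + int K * (r div int K)" by simp
  have "2*pi*real_of_int r/real K * real d
      = 2*pi*real (nat (r mod int K))*real d/real K + 2*pi*real_of_int ((r div int K) * int d)"
  proof -
    have rr: "real_of_int r = real_of_int (r mod int K) + real K * real_of_int (r div int K)"
      using r by (metis of_int_add of_int_mult of_int_of_nat_eq)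
    have nn: "real (nat (r mod int K)) = real_of_int (r mod int K)" using assms by simp
    show ?thesis unfolding nn using assms by (simp add: rr field_simps)
  qed
  hence "cis (2*pi*real_of_int r/real K * real d)
      = cis (2*pi*real (nat (r mod int K))*real d/real K) * cis (2*pi*real_of_int ((r div int K) * int d))"
    by (metis cis_mult)
  also have "cis (2*pi*real_of_int ((r div int K) * int d)) = 1"
    by (rule cis_multiple_2pi) simp
  finally show ?thesis by (simp add: chi_def)
qed

lemma norm_chi[simp]: "cmod (chi N m a) = 1" by (simp add: chi_def)

lemma freq_bound:
  fixes w :: "nat \<Rightarrow> nat \<Rightarrow> real" and G :: real and T p K :: nat and \<alpha> :: real
  assumes p: "p \<ge> 1" and T: "T \<ge> 1" and K: "2*pi*real T*sqrt (real T*real p) \<le> real K"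
  and G: "\<And>a l q. a < K \<Longrightarrow> l < p \<Longrightarrow> q < 4 \<Longrightarrow>
      Re (rho q * (\<Sum>d<T. \<Sum>k<p. complex_of_real (w d k) * (chi K a d * chi p l k))) \<le> G"
  shows "(\<Sum>k<p. (cmod (\<Sum>d<T. complex_of_real (w d k) * cis (\<alpha> * real d)))\<^sup>2) \<le> (4*G)\<^sup>2"
proof -
  have "1 \<le> T*p" using p T by (metis mult_le_mono nat_mult_1)
  hence "1 \<le> real T*real p" by (metis of_nat_mult of_nat_1 of_nat_le_iff)
  hence s1: "sqrt (real T*real p) \<ge> 1" by simp
  have "real T \<le> 2*pi*real T*sqrt (real T*real p)"
  proof -
    have "2*2*1 \<le> 2*pi*sqrt (real T*real p)"
      using s1 pi_ge_two by (intro mult_mono) auto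
    hence "real T * 1 \<le> real T * (2*pi*sqrt (real T*real p))"
      by (intro mult_left_mono) auto
    thus ?thesis by (simp add: mult_ac)
  qed
  hence KT: "T \<le> K" using K by linarith
  hence K0: "K > 0" using T by simp
  define Fg where "Fg a l = (\<Sum>d<T. \<Sum>k<p. complex_of_real (w d k) * (chi K a d * chi p l k))" for a l
  define F where "F \<beta> l = (\<Sum>d<T. \<Sum>k<p. complex_of_real (w d k) * (cis (\<beta> * real d) * chi p l k))" for \<beta> l
  have grid: "cmod (Fg a l) \<le> 2*G" if "a < K" "l < p" for a l
  proof -
    have "Re (rho q * Fg a l) \<le> G" if "q < 4" for q using G[OF \<open>a<K\<close> \<open>l<p\<close> that] by (simp add: Fg_def)
    from this[of 0] this[of 1] this[of 2] this[of 3]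
    have "\<bar>Re (Fg a l)\<bar> \<le> G" "\<bar>Im (Fg a l)\<bar> \<le> G" by (auto simp: rho_def)
    thus ?thesis using cmod_le[of "Fg a l"] by linarith
  qed
  have "cmod (Fg 0 0) \<le> 2*G" using K0 p by (intro grid) auto
  hence G0: "0 \<le> G" using norm_ge_zero[of "Fg 0 0"] by linarith
  let ?I = "{..<T}\<times>{..<p}"
  have w2: "(\<Sum>i\<in>?I. (w (fst i) (snd i))\<^sup>2) \<le> (2*G)\<^sup>2"
  proof -
    have "(\<Sum>(a,l)\<in>{..<K}\<times>{..<p}. (cmod (\<Sum>(d,k)\<in>?I. complex_of_real (w d k) * (chi K a d * chi p l k)))\<^sup>2)
      = real K * real p * (\<Sum>i\<in>?I. (cmod (complex_of_real (w (fst i) (snd i))))\<^sup>2)"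
      using parseval2[OF KT order.refl, of "\<lambda>i. complex_of_real (w (fst i) (snd i))" p]
      by (simp add: case_prod_unfold)
    also have "(\<Sum>(a,l)\<in>{..<K}\<times>{..<p}. (cmod (\<Sum>(d,k)\<in>?I. complex_of_real (w d k) * (chi K a d * chi p l k)))\<^sup>2)
       = (\<Sum>(a,l)\<in>{..<K}\<times>{..<p}. (cmod (Fg a l))\<^sup>2)"
      by (simp add: Fg_def sum.cartesian_product case_prod_unfold)
    finally have eq: "real K * real p * (\<Sum>i\<in>?I. (w (fst i) (snd i))\<^sup>2) = (\<Sum>(a,l)\<in>{..<K}\<times>{..<p}. (cmod (Fg a l))\<^sup>2)"
      by simp
    have "(\<Sum>(a,l)\<in>{..<K}\<times>{..<p}. (cmod (Fg a l))\<^sup>2) \<le> (\<Sum>(a,l)\<in>{..<K}\<times>{..<p}. (2*G)\<^sup>2)"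
    proof (intro sum_mono)
      fix x assume "x \<in> {..<K}\<times>{..<p}"
      then obtain a l where x: "x = (a,l)" "a < K" "l < p" by auto
      have "(cmod (Fg a l))\<^sup>2 \<le> (2*G)\<^sup>2" using grid[OF x(2,3)] by (intro power_mono) auto
      thus "(case x of (a,l) \<Rightarrow> (cmod (Fg a l))\<^sup>2) \<le> (case x of (a,l) \<Rightarrow> (2*G)\<^sup>2)"
        using x by simp
    qed
    also have "\<dots> = real K * real p * (2*G)\<^sup>2" by simp
    finally have "real K * real p * (\<Sum>i\<in>?I. (w (fst i) (snd i))\<^sup>2) \<le> real K * real p * (2*G)\<^sup>2"
      using eq by simp
    moreover have "real K * real p > 0" using K0 p by simp
    ultimately show ?thesis by (simp add: mult_le_cancel_left_pos)
  qed
  have L1: "(\<Sum>d<T. \<Sum>k<p. \<bar>w d k\<bar>) \<le> sqrt (real T * real p) * (2*G)"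
  proof -
    have "(\<Sum>d<T. \<Sum>k<p. \<bar>w d k\<bar>) = (\<Sum>i\<in>?I. \<bar>w (fst i) (snd i)\<bar> * \<bar>1\<bar>)"
      by (simp add: sum.cartesian_product case_prod_unfold)
    also have "\<dots> \<le> L2_set (\<lambda>i. w (fst i) (snd i)) ?I * L2_set (\<lambda>i. 1) ?I"
      by (rule L2_set_mult_ineq)
    also have "L2_set (\<lambda>i. 1::real) ?I = sqrt (real T * real p)"
      by (simp add: L2_set_def card_cartesian_product)
    also have "L2_set (\<lambda>i. w (fst i) (snd i)) ?I \<le> 2*G"
      unfolding L2_set_def using w2 G0 by (metis abs_of_nonneg real_sqrt_abs real_sqrt_le_mono mult_nonneg_nonneg zero_le_numeral)
    hence "L2_set (\<lambda>i. w (fst i) (snd i)) ?I * sqrt (real T * real p) \<le> 2*G * sqrt (real T * real p)"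
      by (intro mult_right_mono) auto
    finally show ?thesis by (simp add: mult_ac)
  qed
  have main: "cmod (F \<alpha> l) \<le> 4*G" if "l < p" for l
  proof -
    define r where "r = \<lfloor>\<alpha> * real K / (2*pi)\<rfloor>"
    define \<alpha>0 where "\<alpha>0 = 2*pi*real_of_int r/real K"
    have "real_of_int r \<le> \<alpha> * real K / (2*pi)" "\<alpha> * real K / (2*pi) < real_of_int r + 1"
      unfolding r_def by linarith+
    hence c1: "real_of_int r * (2*pi) \<le> \<alpha> * real K" and c2: "\<alpha> * real K < (real_of_int r + 1) * (2*pi)"
      by (simp_all add: pos_le_divide_eq pos_divide_less_eq)
    have b1: "\<alpha>0 \<le> \<alpha>" unfolding \<alpha>0_def using c1 K0 by (simp add: pos_divide_le_eq mult_ac)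
    have "\<alpha> - \<alpha>0 = (\<alpha> * real K - 2*pi*real_of_int r) / real K" using K0 by (simp add: \<alpha>0_def field_simps)
    also have "\<dots> \<le> (2*pi) / real K" using c2 K0 by (intro divide_right_mono) (auto simp: algebra_simps)
    finally have b2: "\<alpha> - \<alpha>0 \<le> 2*pi/real K" .
    have F0: "F \<alpha>0 l = Fg (nat (r mod int K)) l"
      unfolding F_def Fg_def \<alpha>0_def using cis_chi_shift[OF K0] by simp
    have diff: "F \<alpha> l - F \<alpha>0 l = (\<Sum>d<T. \<Sum>k<p. complex_of_real (w d k) * ((cis (\<alpha> * real d) - cis (\<alpha>0 * real d)) * chi p l k))"
      unfolding F_def by (simp add: sum_subtractf[symmetric] algebra_simps)
    have "cmod (F \<alpha> l - F \<alpha>0 l) \<le> (\<Sum>d<T. \<Sum>k<p. cmod (complex_of_real (w d k) * ((cis (\<alpha> * real d) - cis (\<alpha>0 * real d)) * chi p l k)))"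
      unfolding diff by (rule order.trans[OF norm_sum], intro sum_mono norm_sum)
    also have "\<dots> \<le> (\<Sum>d<T. \<Sum>k<p. \<bar>w d k\<bar> * (2*pi/real K * real T))"
    proof (intro sum_mono)
      fix d k assume d: "d \<in> {..<T}"
      have "cmod (cis (\<alpha> * real d) - cis (\<alpha>0 * real d)) \<le> \<bar>\<alpha> * real d - \<alpha>0 * real d\<bar>" by (rule cis_dist)
      also have "\<dots> = (\<alpha> - \<alpha>0) * real d" using b1 by (simp add: left_diff_distrib[symmetric] abs_mult)
      also have "\<dots> \<le> 2*pi/real K * real T" using b1 b2 d by (intro mult_mono) auto
      finally show "cmod (complex_of_real (w d k) * ((cis (\<alpha> * real d) - cis (\<alpha>0 * real d)) * chi p l k)) \<le> \<bar>w d k\<bar> * (2*pi/real K * real T)"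
        unfolding norm_mult norm_of_real norm_chi mult_1_right by (rule mult_left_mono) auto
    qed
    also have "\<dots> = (\<Sum>d<T. \<Sum>k<p. \<bar>w d k\<bar>) * (2*pi/real K * real T)"
      by (simp only: sum_distrib_right)
    also have "\<dots> \<le> sqrt (real T * real p) * (2*G) * (2*pi/real K * real T)"
      using L1 by (intro mult_right_mono) auto
    also have "\<dots> = (2*pi*real T*sqrt (real T*real p) / real K) * (2*G)" by (simp add: field_simps)
    also have "\<dots> \<le> 1 * (2*G)" using K K0 G0 by (intro mult_right_mono) (auto simp: field_simps)
    finally have "cmod (F \<alpha> l - F \<alpha>0 l) \<le> 2*G" by simp
    moreover have "cmod (F \<alpha>0 l) \<le> 2*G" unfolding F0 using grid[OF _ \<open>l<p\<close>] K0
      by (simp add: nat_less_iff)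
    ultimately show ?thesis using norm_triangle_ineq[of "F \<alpha> l - F \<alpha>0 l" "F \<alpha>0 l"] by simp
  qed
  define f where "f k = (\<Sum>d<T. complex_of_real (w d k) * cis (\<alpha> * real d))" for k
  have "real p * (\<Sum>k<p. (cmod (f k))\<^sup>2) = (\<Sum>l<p. (cmod (\<Sum>k<p. f k * chi p l k))\<^sup>2)"
    using parseval1[of p p f] by simp
  also have "\<dots> = (\<Sum>l<p. (cmod (F \<alpha> l))\<^sup>2)"
  proof (intro sum.cong refl arg_cong[where f="\<lambda>x. (cmod x)\<^sup>2"])
    fix l
    have "(\<Sum>k<p. f k * chi p l k) = (\<Sum>k<p. \<Sum>d<T. complex_of_real (w d k) * (cis (\<alpha> * real d) * chi p l k))"
      unfolding f_def by (simp add: sum_distrib_right mult.assoc)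
    also have "\<dots> = F \<alpha> l" unfolding F_def by (rule sum.swap)
    finally show "(\<Sum>k<p. f k * chi p l k) = F \<alpha> l" .
  qed
  also have "\<dots> \<le> (\<Sum>l<p. (4*G)\<^sup>2)" using main by (intro sum_mono power_mono) auto
  also have "\<dots> = real p * (4*G)\<^sup>2" by simp
  finally show ?thesis using p unfolding f_def by simp
qed

lemma chi_add: "chi N m (i + d) = chi N m i * chi N m d"
proof -
  have "2*pi*real m*real (i+d)/real N = 2*pi*real m*real i/real N + 2*pi*real m*real d/real N"
    by (simp add: add_divide_distrib[symmetric] distrib_left)
  thus ?thesis unfolding chi_def cis_mult by simp
qed

lemma triple_prod:
  fixes a b e :: "nat \<Rightarrow> complex"
  shows "(\<Sum>i\<in>A. a i) * ((\<Sum>d\<in>B. b d) * (\<Sum>c\<in>C. e c)) = (\<Sum>i\<in>A. \<Sum>d\<in>B. \<Sum>c\<in>C. a i * (b d * e c))"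
proof -
  have eq1: "(\<Sum>d\<in>B. b d) * (\<Sum>c\<in>C. e c) = (\<Sum>d\<in>B. \<Sum>c\<in>C. b d * e c)" by (rule sum_product)
  have "(\<Sum>i\<in>A. a i) * ((\<Sum>d\<in>B. b d) * (\<Sum>c\<in>C. e c)) = (\<Sum>i\<in>A. a i * (\<Sum>d\<in>B. \<Sum>c\<in>C. b d * e c))"
    unfolding eq1 by (rule sum_distrib_right)
  also have "\<dots> = (\<Sum>i\<in>A. \<Sum>d\<in>B. \<Sum>c\<in>C. a i * (b d * e c))" by (simp add: sum_distrib_left)
  finally show ?thesis .
qed

lemma toep_identity:
  fixes u :: "nat \<Rightarrow> real" and w x :: "nat \<Rightarrow> nat \<Rightarrow> real"
  assumes N: "R + T \<le> N" and T: "T \<ge> 1"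
  shows "complex_of_real (real N * (\<Sum>i<R. u i * (\<Sum>k<p. \<Sum>d<T. w d k * x (i+d) k)))
    = (\<Sum>m<N. (\<Sum>i<R. complex_of_real (u i) * cnj (chi N m i)) *
          (\<Sum>k<p. (\<Sum>d<T. complex_of_real (w d k) * cnj (chi N m d)) * (\<Sum>c<R+T-1. complex_of_real (x c k) * chi N m c)))"
  (is "?L = ?R")
proof -
  let ?g = "\<lambda>i k d c. complex_of_real (u i * w d k * x c k)"
  define U where "U m = (\<Sum>i<R. complex_of_real (u i) * cnj (chi N m i))" for m
  define W where "W m k = (\<Sum>d<T. complex_of_real (w d k) * cnj (chi N m d))" for m k
  define X where "X m k = (\<Sum>c<R+T-1. complex_of_real (x c k) * chi N m c)" for m k
  have "?R = (\<Sum>m<N. U m * (\<Sum>k<p. W m k * X m k))" by (simp only: U_def W_def X_def)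
  also have "\<dots> = (\<Sum>m<N. \<Sum>k<p. U m * (W m k * X m k))" by (simp only: sum_distrib_left)
  also have "\<dots> = (\<Sum>m<N. \<Sum>k<p. \<Sum>i<R. \<Sum>d<T. \<Sum>c<R+T-1.
        (complex_of_real (u i) * cnj (chi N m i)) * ((complex_of_real (w d k) * cnj (chi N m d)) * (complex_of_real (x c k) * chi N m c)))"
    by (intro sum.cong refl) (simp only: U_def W_def X_def triple_prod)
  also have "\<dots> = (\<Sum>m<N. \<Sum>k<p. \<Sum>i<R. \<Sum>d<T. \<Sum>c<R+T-1. ?g i k d c * (chi N m c * cnj (chi N m (i+d))))"
    by (intro sum.cong refl) (simp add: chi_add mult_ac)
  also have "\<dots> = (\<Sum>m<N. \<Sum>i<R. \<Sum>k<p. \<Sum>d<T. \<Sum>c<R+T-1. ?g i k d c * (chi N m c * cnj (chi N m (i+d))))"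
    by (rule sum.cong[OF refl], rule sum.swap)
  also have "\<dots> = (\<Sum>i<R. \<Sum>m<N. \<Sum>k<p. \<Sum>d<T. \<Sum>c<R+T-1. ?g i k d c * (chi N m c * cnj (chi N m (i+d))))"
    by (rule sum.swap)
  also have "\<dots> = (\<Sum>i<R. \<Sum>k<p. \<Sum>m<N. \<Sum>d<T. \<Sum>c<R+T-1. ?g i k d c * (chi N m c * cnj (chi N m (i+d))))"
    by (rule sum.cong[OF refl], rule sum.swap)
  also have "\<dots> = (\<Sum>i<R. \<Sum>k<p. \<Sum>d<T. \<Sum>m<N. \<Sum>c<R+T-1. ?g i k d c * (chi N m c * cnj (chi N m (i+d))))"
    by (rule sum.cong[OF refl], rule sum.cong[OF refl], rule sum.swap)
  also have "\<dots> = (\<Sum>i<R. \<Sum>k<p. \<Sum>d<T. \<Sum>c<R+T-1. \<Sum>m<N. ?g i k d c * (chi N m c * cnj (chi N m (i+d))))"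
    by (rule sum.cong[OF refl], rule sum.cong[OF refl], rule sum.cong[OF refl], rule sum.swap)
  also have "\<dots> = (\<Sum>i<R. \<Sum>k<p. \<Sum>d<T. \<Sum>c<R+T-1. ?g i k d c * (if c = i + d then complex_of_real (real N) else 0))"
  proof (intro sum.cong refl)
    fix i k d c assume i: "i \<in> {..<R}" and d: "d \<in> {..<T}" and c: "c \<in> {..<R+T-1}"
    have "c < N" "i + d < N" using i d c N by auto
    thus "(\<Sum>m<N. ?g i k d c * (chi N m c * cnj (chi N m (i+d)))) = ?g i k d c * (if c = i + d then complex_of_real (real N) else 0)"
      by (simp add: sum_distrib_left[symmetric] orth1)
  qed
  also have "\<dots> = (\<Sum>i<R. \<Sum>k<p. \<Sum>d<T. ?g i k d (i+d) * complex_of_real (real N))"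
  proof (intro sum.cong refl)
    fix i k d assume i: "i \<in> {..<R}" and d: "d \<in> {..<T}"
    have "i + d \<in> {..<R+T-1}" using i d by auto
    thus "(\<Sum>c<R+T-1. ?g i k d c * (if c = i + d then complex_of_real (real N) else 0)) = ?g i k d (i+d) * complex_of_real (real N)"
      by (simp add: if_distrib cong: if_cong)
  qed
  also have "\<dots> = ?L"
    by (simp add: sum_distrib_left sum_distrib_right mult_ac)
  finally show ?thesis ..
qed


lemma L2_sq: "(L2_set f A)\<^sup>2 = (\<Sum>i\<in>A. (f i)\<^sup>2)"
  unfolding L2_set_def by (simp add: sum_nonneg)

lemma toep_bound:
  fixes u :: "nat \<Rightarrow> real" and w x :: "nat \<Rightarrow> nat \<Rightarrow> real" and B :: real
  assumes T: "T \<ge> 1" and B0: "B \<ge> 0"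
  and Wb: "\<And>\<alpha>. (\<Sum>k<p. (cmod (\<Sum>d<T. complex_of_real (w d k) * cis (\<alpha> * real d)))\<^sup>2) \<le> B\<^sup>2"
  shows "\<bar>\<Sum>i<R. u i * (\<Sum>k<p. \<Sum>d<T. w d k * x (i+d) k)\<bar>
     \<le> B * sqrt (\<Sum>i<R. (u i)\<^sup>2) * sqrt (\<Sum>c<R+T-1. \<Sum>k<p. (x c k)\<^sup>2)"
proof -
  define N where "N = R + T"
  have N0: "N > 0" using T by (simp add: N_def)
  define Y where "Y = (\<Sum>i<R. u i * (\<Sum>k<p. \<Sum>d<T. w d k * x (i+d) k))"
  define U where "U m = (\<Sum>i<R. complex_of_real (u i) * cnj (chi N m i))" for m
  define W where "W m k = (\<Sum>d<T. complex_of_real (w d k) * cnj (chi N m d))" for m k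
  define X where "X m k = (\<Sum>c<R+T-1. complex_of_real (x c k) * chi N m c)" for m k
  define L2X where "L2X m = L2_set (\<lambda>k. cmod (X m k)) {..<p}" for m
  have id: "complex_of_real (real N * Y) = (\<Sum>m<N. U m * (\<Sum>k<p. W m k * X m k))"
    unfolding Y_def U_def W_def X_def by (rule toep_identity) (use T in \<open>auto simp: N_def\<close>)
  have Wm: "L2_set (\<lambda>k. cmod (W m k)) {..<p} \<le> B" for m
  proof -
    have eqW: "W m k = (\<Sum>d<T. complex_of_real (w d k) * cis ((-(2*pi*real m/real N)) * real d))" for k
      unfolding W_def chi_def cis_cnj by (intro sum.cong refl) (simp add: mult_ac)
    have "(\<Sum>k<p. (cmod (W m k))\<^sup>2) \<le> B\<^sup>2" unfolding eqW by (rule Wb)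
    hence "L2_set (\<lambda>k. cmod (W m k)) {..<p} \<le> sqrt (B\<^sup>2)" unfolding L2_set_def
      by (rule real_sqrt_le_mono)
    thus ?thesis using B0 by simp
  qed
  have Sm: "cmod (\<Sum>k<p. W m k * X m k) \<le> B * L2X m" for m
  proof -
    have "cmod (\<Sum>k<p. W m k * X m k) \<le> (\<Sum>k<p. \<bar>cmod (W m k)\<bar> * \<bar>cmod (X m k)\<bar>)"
      by (rule order.trans[OF norm_sum]) (simp add: norm_mult)
    also have "\<dots> \<le> L2_set (\<lambda>k. cmod (W m k)) {..<p} * L2X m"
      unfolding L2X_def by (rule L2_set_mult_ineq)
    also have "\<dots> \<le> B * L2X m" using Wm by (intro mult_right_mono) (auto simp: L2X_def L2_set_nonneg)
    finally show ?thesis .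
  qed
  have "real N * \<bar>Y\<bar> = cmod (complex_of_real (real N * Y))" unfolding norm_of_real abs_mult by simp
  also have "\<dots> \<le> (\<Sum>m<N. cmod (U m) * cmod (\<Sum>k<p. W m k * X m k))"
    unfolding id by (rule order.trans[OF norm_sum]) (simp add: norm_mult)
  also have "\<dots> \<le> (\<Sum>m<N. cmod (U m) * (B * L2X m))"
    using Sm by (intro sum_mono mult_left_mono) auto
  also have "\<dots> = B * (\<Sum>m<N. \<bar>cmod (U m)\<bar> * \<bar>L2X m\<bar>)"
    by (simp add: sum_distrib_left mult_ac L2X_def L2_set_nonneg)
  also have "\<dots> \<le> B * (L2_set (\<lambda>m. cmod (U m)) {..<N} * L2_set L2X {..<N})"
    using B0 by (intro mult_left_mono L2_set_mult_ineq) auto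
  also have "L2_set (\<lambda>m. cmod (U m)) {..<N} = sqrt (real N * (\<Sum>i<R. (u i)\<^sup>2))"
  proof -
    have "cmod (U m) = cmod (\<Sum>i<R. complex_of_real (u i) * chi N m i)" for m
    proof -
      have "cmod (U m) = cmod (cnj (U m))" by simp
      also have "cnj (U m) = (\<Sum>i<R. complex_of_real (u i) * chi N m i)" by (simp add: U_def)
      finally show ?thesis .
    qed
    hence "(\<Sum>m<N. (cmod (U m))\<^sup>2) = real N * (\<Sum>i<R. (cmod (complex_of_real (u i)))\<^sup>2)"
      using parseval1[of R N "\<lambda>i. complex_of_real (u i)"] by (simp add: N_def)
    thus ?thesis unfolding L2_set_def by simp
  qed
  also have "L2_set L2X {..<N} = sqrt (real N * (\<Sum>c<R+T-1. \<Sum>k<p. (x c k)\<^sup>2))"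
  proof -
    have "(\<Sum>m<N. (L2X m)\<^sup>2) = (\<Sum>m<N. \<Sum>k<p. (cmod (X m k))\<^sup>2)" by (simp add: L2X_def L2_sq)
    also have "\<dots> = (\<Sum>k<p. \<Sum>m<N. (cmod (X m k))\<^sup>2)" by (rule sum.swap)
    also have "\<dots> = (\<Sum>k<p. real N * (\<Sum>c<R+T-1. (x c k)\<^sup>2))"
    proof (rule sum.cong[OF refl])
      fix k
      show "(\<Sum>m<N. (cmod (X m k))\<^sup>2) = real N * (\<Sum>c<R+T-1. (x c k)\<^sup>2)"
        using parseval1[of "R+T-1" N "\<lambda>c. complex_of_real (x c k)"] by (simp add: X_def N_def)
    qed
    also have "\<dots> = real N * (\<Sum>c<R+T-1. \<Sum>k<p. (x c k)\<^sup>2)"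
      by (simp add: sum_distrib_left sum.swap[of _ "{..<p}"])
    finally show ?thesis unfolding L2_set_def by simp
  qed
  also have "B * (sqrt (real N * (\<Sum>i<R. (u i)\<^sup>2)) * sqrt (real N * (\<Sum>c<R+T-1. \<Sum>k<p. (x c k)\<^sup>2)))
      = real N * (B * sqrt (\<Sum>i<R. (u i)\<^sup>2) * sqrt (\<Sum>c<R+T-1. \<Sum>k<p. (x c k)\<^sup>2))"
    by (simp add: real_sqrt_mult mult_ac)
  finally show ?thesis using N0 unfolding Y_def by (simp add: mult_le_cancel_left_pos)
qed

lemma sum_split_add:
  fixes f :: "nat \<Rightarrow> 'a::comm_monoid_add"
  shows "(\<Sum>j<n+m. f j) = (\<Sum>j<n. f j) + (\<Sum>k<m. f (n+k))"
  by (induction m) (simp_all add: add_Suc_right ac_simps)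

lemma sum_blocks:
  fixes C p :: nat and f :: "nat \<Rightarrow> 'a::comm_monoid_add"
  shows "(\<Sum>j<C*p. f j) = (\<Sum>c<C. \<Sum>k<p. f (c*p+k))"
proof (induction C)
  case 0 then show ?case by simp
next
  case (Suc C)
  have "(\<Sum>j<C*p + p. f j) = (\<Sum>j<C*p. f j) + (\<Sum>k<p. f (C*p+k))"
    by (rule sum_split_add)
  then show ?case using Suc by (simp add: add.commute)
qed

lemma sum_blocks_rev:
  fixes T p :: nat and f :: "nat \<Rightarrow> 'a::comm_monoid_add"
  shows "(\<Sum>j<T*p. f j) = (\<Sum>d<T. \<Sum>k<p. f ((T-1-d)*p+k))"
proof -
  have "(\<Sum>j<T*p. f j) = (\<Sum>c<T. \<Sum>k<p. f (c*p+k))" by (rule sum_blocks)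
  also have "\<dots> = (\<Sum>d<T. \<Sum>k<p. f ((T - Suc d)*p+k))"
    by (rule sum.nat_diff_reindex[symmetric, where g="\<lambda>c. \<Sum>k<p. f (c*p+k)"])
  finally show ?thesis by simp
qed

lemma sum_window:
  fixes h :: "nat \<Rightarrow> 'a::comm_monoid_add"
  assumes "i + T \<le> C"
  shows "(\<Sum>c<C. if i \<le> c \<and> c < i + T then h c else 0) = (\<Sum>d<T. h (i+d))"
proof -
  have "(\<Sum>c<C. if i \<le> c \<and> c < i + T then h c else 0) = (\<Sum>c<C. if c \<in> {i..<i+T} then h c else 0)"
    by (intro sum.cong refl) auto
  also have "\<dots> = sum h ({..<C} \<inter> {i..<i+T})" by (simp add: sum.inter_restrict)
  also have "{..<C} \<inter> {i..<i+T} = {0+i..<T+i}" using assms by auto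
  also have "sum h \<dots> = sum (\<lambda>d. h (d+i)) {0..<T}" by (rule sum.shift_bounds_nat_ivl)
  also have "\<dots> = (\<Sum>d<T. h (i+d))" by (simp add: atLeast0LessThan add.commute)
  finally show ?thesis .
qed

lemma toep_row:
  assumes i: "i < R" and T: "T \<ge> 1" and p: "p \<ge> 1"
  shows "(\<Sum>j<(R+T-1)*p. toep_entry T p v i j * xx j)
     = (\<Sum>k<p. \<Sum>d<T. v ((T-1-d)*p+k) * xx ((i+d)*p+k))"
proof -
  have "(\<Sum>j<(R+T-1)*p. toep_entry T p v i j * xx j)
      = (\<Sum>c<R+T-1. \<Sum>k<p. toep_entry T p v i (c*p+k) * xx (c*p+k))" by (rule sum_blocks)
  also have "\<dots> = (\<Sum>c<R+T-1. \<Sum>k<p. if i \<le> c \<and> c < i + T then v ((T-1-(c-i))*p+k) * xx (c*p+k) else 0)"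
  proof (intro sum.cong refl)
    fix c k assume "k \<in> {..<p}"
    hence "(c*p+k) div p = c" "(c*p+k) mod p = k" by auto
    thus "toep_entry T p v i (c*p+k) * xx (c*p+k) = (if i \<le> c \<and> c < i + T then v ((T-1-(c-i))*p+k) * xx (c*p+k) else 0)"
      unfolding toep_entry_def Let_def by simp
  qed
  also have "\<dots> = (\<Sum>k<p. \<Sum>c<R+T-1. if i \<le> c \<and> c < i + T then v ((T-1-(c-i))*p+k) * xx (c*p+k) else 0)"
    by (rule sum.swap)
  also have "\<dots> = (\<Sum>k<p. \<Sum>d<T. v ((T-1-d)*p+k) * xx ((i+d)*p+k))"
  proof (rule sum.cong[OF refl])
    fix k
    show "(\<Sum>c<R+T-1. if i \<le> c \<and> c < i + T then v ((T-1-(c-i))*p+k) * xx (c*p+k) else 0)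
      = (\<Sum>d<T. v ((T-1-d)*p+k) * xx ((i+d)*p+k))"
      using sum_window[of i T "R+T-1" "\<lambda>c. v ((T-1-(c-i))*p+k) * xx (c*p+k)"] i T by simp
  qed
  finally show ?thesis .
qed

lemma Re_rho_real: "Re (z * (complex_of_real r * c)) = r * Re (z * c)"
  by (simp add: algebra_simps)

lemma cmod_rho: "cmod (rho q) = 1"
  by (simp add: rho_def)

theorem lemma11:
  fixes R T p :: nat
  assumes "R \<ge> 1" and "T \<ge> 1" and "p \<ge> 1"
  shows "\<exists>Z :: (nat \<Rightarrow> real) set.
           finite Z \<and> Z \<noteq> {} \<and>
           (\<forall>z\<in>Z. \<forall>j. j \<ge> T * p \<longrightarrow> z j = 0) \<and>
           real (card Z) \<le> 16 * pi * real (T * p) powr (3/2) \<and>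
           (\<forall>z\<in>Z. \<forall>j<T * p. \<bar>z j\<bar> \<le> 1) \<and>
           (\<forall>v :: nat \<Rightarrow> real. (\<forall>j. j \<ge> T * p \<longrightarrow> v j = 0) \<longrightarrow>
              toep_norm R T p v \<le> 4 * Max ((\<lambda>z. \<Sum>j<T * p. z j * v j) ` Z))"
proof -
  have R: "R \<ge> 1" and T: "T \<ge> 1" and p: "p \<ge> 1" using assms by auto
  define s where "s = sqrt (real T * real p)"
  have "1 \<le> T*p" using p T by (metis mult_le_mono nat_mult_1)
  hence Tp1: "1 \<le> real T*real p" by (metis of_nat_mult of_nat_1 of_nat_le_iff)
  hence s1: "s \<ge> 1" by (simp add: s_def)
  define x0 where "x0 = 2*pi*real T*s"
  have x0pos: "x0 > 0" using T s1 by (simp add: x0_def)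
  define K where "K = nat \<lceil>x0\<rceil>"
  have K1: "x0 \<le> real K" unfolding K_def by linarith
  have K2: "real K \<le> x0 + 1" unfolding K_def using x0pos
    by (simp add: of_int_ceiling_le_add_one)
  have K0: "K > 0" using K1 x0pos by linarith
  define zf where "zf a l q j = (if j < T*p then Re (rho q * (chi K a (T-1-j div p) * chi p l (j mod p))) else 0)"
    for a l q j
  define D where "D = {..<K}\<times>{..<p}\<times>{..<4::nat}"
  define Z where "Z = (\<lambda>(a,l,q). zf a l q) ` D"
  have finD: "finite D" by (simp add: D_def)
  have finZ: "finite Z" by (simp add: Z_def finD)
  have mem: "zf a l q \<in> Z" if "a < K" "l < p" "q < 4" for a l q
    using that unfolding Z_def D_def by force
  have Zne: "Z \<noteq> {}" using mem[of 0 0 0] K0 p by auto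
  have supp: "\<forall>z\<in>Z. \<forall>j. j \<ge> T * p \<longrightarrow> z j = 0" by (auto simp: Z_def zf_def)
  have bnd: "\<forall>z\<in>Z. \<forall>j<T * p. \<bar>z j\<bar> \<le> 1"
  proof (intro ballI allI impI)
    fix z j assume "z \<in> Z" and jj: "j < T*p"
    then obtain a l q where z: "z = zf a l q" by (auto simp: Z_def)
    have "\<bar>z j\<bar> \<le> cmod (rho q * (chi K a (T-1-j div p) * chi p l (j mod p)))"
      unfolding z zf_def if_P[OF jj] by (rule abs_Re_le_cmod)
    also have "\<dots> = 1" by (simp add: norm_mult cmod_rho)
    finally show "\<bar>z j\<bar> \<le> 1" .
  qed
  have card: "real (card Z) \<le> 16 * pi * real (T * p) powr (3/2)"
  proof -
    have "card Z \<le> card D" unfolding Z_def by (rule card_image_le[OF finD])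
    also have "card D = K * p * 4" by (simp add: D_def card_cartesian_product)
    finally have "real (card Z) \<le> real K * real p * 4" by (metis of_nat_le_iff of_nat_mult of_nat_numeral)
    also have "\<dots> \<le> (x0 + 1) * real p * 4" using K2 by (intro mult_right_mono) auto
    also have "\<dots> = 8*pi*(real T*real p)*s + 4 * real p" by (simp add: x0_def algebra_simps)
    also have "4 * real p \<le> 8*pi*(real T*real p)*s"
    proof -
      have "2*2*1*1 \<le> 2*pi*real T*s" using s1 T pi_ge_two by (intro mult_mono) auto
      hence h1: "1 \<le> 2*pi*real T*s" by linarith
      have "4*real p*1 \<le> 4*real p*(2*pi*real T*s)" by (rule mult_left_mono[OF h1]) simp
      thus ?thesis by (simp add: algebra_simps)
    qed
    also have "8*pi*(real T*real p)*s + 8*pi*(real T*real p)*s = 16 * pi * real (T * p) powr (3/2)"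
    proof -
      have e: "(3/2::real) = 1 + 1/2" by simp
      have "real (T*p) powr (3/2) = real (T*p) powr 1 * real (T*p) powr (1/2)"
        unfolding e by (rule powr_add)
      also have "\<dots> = (real T*real p) * s" using Tp1 by (simp add: s_def powr_half_sqrt)
      finally show ?thesis by simp
    qed
    finally show ?thesis by simp
  qed
  have main: "toep_norm R T p v \<le> 4 * Max ((\<lambda>z. \<Sum>j<T * p. z j * v j) ` Z)"
    if vsupp: "\<forall>j. j \<ge> T * p \<longrightarrow> v j = 0" for v :: "nat \<Rightarrow> real"
  proof -
    define w where "w d k = v ((T-1-d)*p+k)" for d k
    define G where "G = Max ((\<lambda>z. \<Sum>j<T * p. z j * v j) ` Z)"
    have key: "(\<Sum>j<T*p. zf a l q j * v j) = Re (rho q * (\<Sum>d<T. \<Sum>k<p. complex_of_real (w d k) * (chi K a d * chi p l k)))"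
      for a l q
    proof -
      have "(\<Sum>j<T*p. zf a l q j * v j) = (\<Sum>d<T. \<Sum>k<p. zf a l q ((T-1-d)*p+k) * v ((T-1-d)*p+k))"
        by (rule sum_blocks_rev)
      also have "\<dots> = (\<Sum>d<T. \<Sum>k<p. w d k * Re (rho q * (chi K a d * chi p l k)))"
      proof (intro sum.cong refl)
        fix d k assume d: "d \<in> {..<T}" and k: "k \<in> {..<p}"
        have j1: "((T-1-d)*p+k) div p = T-1-d" "((T-1-d)*p+k) mod p = k" using k by auto
        have "(T-1-d)*p+k < (T-1-d)*p + p" using k by simp
        also have "\<dots> = (T-d)*p" using d by (simp add: algebra_simps Suc_diff_Suc[symmetric])
        also have "\<dots> \<le> T*p" by simp
        finally have j2: "(T-1-d)*p+k < T*p" .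
        have j3: "T - 1 - (T-1-d) = d" using d by simp
        show "zf a l q ((T-1-d)*p+k) * v ((T-1-d)*p+k) = w d k * Re (rho q * (chi K a d * chi p l k))"
          unfolding zf_def w_def if_P[OF j2] j1 j3 by simp
      qed
      also have "\<dots> = Re (rho q * (\<Sum>d<T. \<Sum>k<p. complex_of_real (w d k) * (chi K a d * chi p l k)))"
        by (simp only: sum_distrib_left Re_sum Re_rho_real)
      finally show ?thesis .
    qed
    have Gb: "Re (rho q * (\<Sum>d<T. \<Sum>k<p. complex_of_real (w d k) * (chi K a d * chi p l k))) \<le> G"
      if "a < K" "l < p" "q < 4" for a l q
    proof -
      have "(\<Sum>j<T*p. zf a l q j * v j) \<in> (\<lambda>z. \<Sum>j<T * p. z j * v j) ` Z"
        using mem[OF that] by blast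
      hence "(\<Sum>j<T*p. zf a l q j * v j) \<le> G" unfolding G_def using finZ by simp
      thus ?thesis by (simp add: key)
    qed
    have G0: "0 \<le> G"
    proof -
      let ?F = "\<Sum>d<T. \<Sum>k<p. complex_of_real (w d k) * (chi K 0 d * chi p 0 k)"
      have "Re (rho 0 * ?F) \<le> G" "Re (rho 2 * ?F) \<le> G" using Gb K0 p by auto
      thus ?thesis by (simp add: rho_def)
    qed
    have Wb: "(\<Sum>k<p. (cmod (\<Sum>d<T. complex_of_real (w d k) * cis (\<alpha> * real d)))\<^sup>2) \<le> (4*G)\<^sup>2" for \<alpha>
      by (rule freq_bound[OF p T _ Gb]) (use K1 in \<open>auto simp: x0_def s_def\<close>)
    have elem: "sqrt (\<Sum>i<R. (\<Sum>j<(R+T-1)*p. toep_entry T p v i j * xx j)\<^sup>2) \<le> 4*G"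
      if xx1: "(\<Sum>j<(R+T-1)*p. (xx j)\<^sup>2) \<le> 1" for xx
    proof -
      define y where "y i = (\<Sum>j<(R+T-1)*p. toep_entry T p v i j * xx j)" for i
      define x where "x c k = xx (c*p+k)" for c k
      have yi: "y i = (\<Sum>k<p. \<Sum>d<T. w d k * x (i+d) k)" if "i < R" for i
        unfolding y_def w_def x_def by (rule toep_row[OF that T p])
      have "(\<Sum>c<R+T-1. \<Sum>k<p. (x c k)\<^sup>2) = (\<Sum>j<(R+T-1)*p. (xx j)\<^sup>2)"
        unfolding x_def by (rule sum_blocks[symmetric])
      hence x1: "sqrt (\<Sum>c<R+T-1. \<Sum>k<p. (x c k)\<^sup>2) \<le> 1" using xx1 by simp
      define Y where "Y = (\<Sum>i<R. (y i)\<^sup>2)"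
      have Y0: "Y \<ge> 0" by (simp add: Y_def sum_nonneg)
      have "Y = \<bar>\<Sum>i<R. y i * (\<Sum>k<p. \<Sum>d<T. w d k * x (i+d) k)\<bar>"
        unfolding Y_def by (subst sum.cong[OF refl, of _ _ "\<lambda>i. (y i)\<^sup>2"]) (auto simp: yi power2_eq_square sum_nonneg)
      also have "\<dots> \<le> 4*G * sqrt (\<Sum>i<R. (y i)\<^sup>2) * sqrt (\<Sum>c<R+T-1. \<Sum>k<p. (x c k)\<^sup>2)"
        by (rule toep_bound[OF T _ Wb]) (use G0 in simp)
      also have "\<dots> \<le> 4*G * sqrt Y * 1"
        unfolding Y_def by (rule mult_left_mono) (use x1 G0 in \<open>auto simp: sum_nonneg\<close>)
      finally have YY: "sqrt Y * sqrt Y \<le> 4*G * sqrt Y" using Y0 by simp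
      have "sqrt Y \<le> 4*G"
      proof (cases "sqrt Y = 0")
        case True thus ?thesis using G0 by simp
      next
        case False hence "sqrt Y > 0" using Y0 by simp
        thus ?thesis using YY by (rule mult_right_le_imp_le[rotated])
      qed
      thus ?thesis by (simp add: Y_def y_def)
    qed
    have "toep_norm R T p v = Sup {sqrt (\<Sum>i<R. (\<Sum>j<(R+T-1)*p. toep_entry T p v i j * xx j)\<^sup>2) | xx. (\<Sum>j<(R+T-1)*p. (xx j)\<^sup>2) \<le> 1}"
      by (simp add: toep_norm_def op_norm_def)
    also have "\<dots> \<le> 4*G"
    proof (rule cSup_least)
      show "{sqrt (\<Sum>i<R. (\<Sum>j<(R+T-1)*p. toep_entry T p v i j * xx j)\<^sup>2) | xx. (\<Sum>j<(R+T-1)*p. (xx j)\<^sup>2) \<le> 1} \<noteq> {}"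
        by (rule ccontr) (auto dest: spec[of _ "\<lambda>_. 0"])
    next
      fix r assume "r \<in> {sqrt (\<Sum>i<R. (\<Sum>j<(R+T-1)*p. toep_entry T p v i j * xx j)\<^sup>2) | xx. (\<Sum>j<(R+T-1)*p. (xx j)\<^sup>2) \<le> 1}"
      then show "r \<le> 4*G" using elem by auto
    qed
    finally show ?thesis by (simp add: G_def)
  qed
  show ?thesis
    by (rule exI[of _ Z]) (use finZ Zne supp card bnd main in blast)
qed

end
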